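(* Let $F\subset X$ be the (finite, closed) set of classes of $K$-lattices with $\phi=0$, and let $G_1$ be the reduction of $G_K$ to $X\setminus F$ (elements whose source and range lie in $X\setminus F$). For every $\gamma\in G_1\setminus G_1^{(0)}$ there is an open neighborhood $V$ of $\gamma$ in $G_K$ such that $r(V)\cap s(V)=\emptyset$, where $r,s$ are the range and source maps of $G_K$.
   Context: $K$ is an imaginary quadratic field with a fixed embedding $K\subset\mathbb C$, $\mathcal O$ its ring of integers. A $K$-lattice $(\Lambda,\phi)$: finitely generated $\mathcal O$-submodule $\Lambda\subset\mathbb C$ with $\Lambda\otimes_{\mathcal O}K\cong K$ and $\mathcal O$-module map $\phi:K/\mathcal O\to K\Lambda/\Lambda$; commensurability: $K\Lambda_1=K\Lambda_2$, $\phi_1=\phi_2$ mod $\Lambda_1+\Lambda_2$. $\tilde{\mathcal R}_K$ is the locally compact étale groupoid of commensurable pairs (topology induced from the commensurability groupoid of 2-dimensional $\mathbb Q$-lattices, in which $(\Lambda,\phi)$ corresponds via $K$-lattices $\leftrightarrow\hat{\mathcal O}\times_{\hat{\mathcal O}^*}(\mathbb A_K^*/K^* )$ to the product topology), $G_K=\tilde{\mathcal R}_K/\mathbb C^*$ with the quotient topology, and $X=G_K^{(0)}$ the space of $K$-lattices up to scaling. *)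

theory Defs
  imports "HOL-Analysis.Analysis" "HOL-Computational_Algebra.Polynomial"
begin

(* K is given as a subset of the complex numbers (fixed embedding K \<subseteq> C). *)
definition imag_quadratic_field :: "complex set \<Rightarrow> bool" where
  "imag_quadratic_field K \<longleftrightarrow>
     (\<exists>\<theta>. \<theta> \<notin> \<real> \<and> K = {of_rat a + of_rat b * \<theta> | a b. True}) \<and>
     (\<forall>x\<in>K. \<forall>y\<in>K. x * y \<in> K) \<and> (\<forall>x\<in>K. inverse x \<in> K)"

definition OK :: "complex set \<Rightarrow> complex set" where
  "OK K = {x \<in> K. algebraic_int x}"

(* a K-lattice is represented by (Lambda, phi); phi : K \<rightarrow> C represents a map K/O \<rightarrow> K Lambda / Lambda *)
type_synonym klat = "complex set \<times> (complex \<Rightarrow> complex)"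

definition Kspan :: "complex set \<Rightarrow> complex set \<Rightarrow> complex set" where
  "Kspan K \<Lambda> = {k * x | k x. k \<in> K \<and> x \<in> \<Lambda>}"

definition is_klattice :: "complex set \<Rightarrow> klat \<Rightarrow> bool" where
  "is_klattice K L \<longleftrightarrow>
     (let \<Lambda> = fst L; \<phi> = snd L in
       \<comment> \<open>finitely generated O-submodule of C\<close>
       (\<exists>S. finite S \<and> \<Lambda> = {\<Sum>s\<in>S. a s * s | a. \<forall>s\<in>S. a s \<in> OK K}) \<and>
       \<comment> \<open>Lambda tensor_O K = K, i.e. Lambda has rank one\<close>
       \<Lambda> \<noteq> {0} \<and> (\<exists>w. \<Lambda> \<subseteq> {k * w | k. k \<in> K}) \<and>
       \<comment> \<open>phi is a well-defined O-module map K/O \<rightarrow> K Lambda / Lambda\<close>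
       (\<forall>x\<in>K. \<phi> x \<in> Kspan K \<Lambda>) \<and>
       (\<forall>x\<in>K. \<forall>y\<in>K. x - y \<in> OK K \<longrightarrow> \<phi> x - \<phi> y \<in> \<Lambda>) \<and>
       (\<forall>x\<in>K. \<forall>y\<in>K. \<phi> (x + y) - \<phi> x - \<phi> y \<in> \<Lambda>) \<and>
       (\<forall>a\<in>OK K. \<forall>x\<in>K. \<phi> (a * x) - a * \<phi> x \<in> \<Lambda>))"

(* equality of K-lattices (same lattice, same map mod Lambda) *)
definition klat_eq :: "complex set \<Rightarrow> klat \<Rightarrow> klat \<Rightarrow> bool" where
  "klat_eq K L L' \<longleftrightarrow> fst L = fst L' \<and> (\<forall>x\<in>K. snd L x - snd L' x \<in> fst L)"

definition commens :: "complex set \<Rightarrow> klat \<Rightarrow> klat \<Rightarrow> bool" where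
  "commens K L1 L2 \<longleftrightarrow> Kspan K (fst L1) = Kspan K (fst L2) \<and>
     (\<forall>x\<in>K. snd L1 x - snd L2 x \<in> {a + b | a b. a \<in> fst L1 \<and> b \<in> fst L2})"

definition scale :: "complex \<Rightarrow> klat \<Rightarrow> klat" where
  "scale c L = ((*) c ` fst L, \<lambda>x. c * snd L x)"

(* representatives of elements of the groupoid tilde R_K *)
definition Rt :: "complex set \<Rightarrow> (klat \<times> klat) set" where
  "Rt K = {(L1, L2). is_klattice K L1 \<and> is_klattice K L2 \<and> commens K L1 L2}"

(* basic neighbourhoods in tilde R_K (topology induced from the commensurability
   groupoid of 2-dimensional Q-lattices): deform both lattices by the same real-linear
   map alpha close to the identity and require agreement of both phi's on (1/N)O/O *)
definition nbhd :: "complex set \<Rightarrow> klat \<times> klat \<Rightarrow> real \<Rightarrow> nat \<Rightarrow> (klat \<times> klat) set" where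
  "nbhd K \<gamma> \<epsilon> N = {\<gamma>' \<in> Rt K. \<exists>\<alpha>. linear \<alpha> \<and> onorm (\<lambda>z. \<alpha> z - z) < \<epsilon> \<and>
      fst (fst \<gamma>') = \<alpha> ` fst (fst \<gamma>) \<and> fst (snd \<gamma>') = \<alpha> ` fst (snd \<gamma>) \<and>
      (\<forall>x\<in>K. of_nat N * x \<in> OK K \<longrightarrow>
          snd (fst \<gamma>') x - \<alpha> (snd (fst \<gamma>) x) \<in> fst (fst \<gamma>') \<and>
          snd (snd \<gamma>') x - \<alpha> (snd (snd \<gamma>) x) \<in> fst (snd \<gamma>'))}"

definition rt_open :: "complex set \<Rightarrow> (klat \<times> klat) set \<Rightarrow> bool" where
  "rt_open K W \<longleftrightarrow> W \<subseteq> Rt K \<and> (\<forall>\<gamma>\<in>W. \<exists>\<epsilon>>0. \<exists>N>0. nbhd K \<gamma> \<epsilon> N \<subseteq> W)"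

(* G_K = tilde R_K / C^*: identify equal K-lattice pairs and scalings *)
definition gk_rel :: "complex set \<Rightarrow> ((klat \<times> klat) \<times> (klat \<times> klat)) set" where
  "gk_rel K = {(\<gamma>, \<gamma>'). \<gamma> \<in> Rt K \<and> \<gamma>' \<in> Rt K \<and> (\<exists>c. c \<noteq> 0 \<and>
      klat_eq K (fst \<gamma>') (scale c (fst \<gamma>)) \<and> klat_eq K (snd \<gamma>') (scale c (snd \<gamma>)))}"

definition GK :: "complex set \<Rightarrow> (klat \<times> klat) set set" where
  "GK K = Rt K // gk_rel K"

definition gk_open :: "complex set \<Rightarrow> (klat \<times> klat) set set \<Rightarrow> bool" where
  "gk_open K V \<longleftrightarrow> V \<subseteq> GK K \<and> rt_open K (\<Union>V)"

(* points of X: K-lattices up to scaling *)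
definition xclass :: "complex set \<Rightarrow> klat \<Rightarrow> klat set" where
  "xclass K L = {L'. is_klattice K L' \<and> (\<exists>c. c \<noteq> 0 \<and> klat_eq K L' (scale c L))}"

definition Xset :: "complex set \<Rightarrow> klat set set" where
  "Xset K = {xclass K L | L. is_klattice K L}"

(* F: classes with phi = 0 *)
definition Fset :: "complex set \<Rightarrow> klat set set" where
  "Fset K = {xclass K L | L. is_klattice K L \<and> (\<forall>x\<in>K. snd L x \<in> fst L)}"

definition rg :: "(klat \<times> klat) set \<Rightarrow> klat set" where
  "rg \<Gamma> = fst ` \<Gamma>"

definition sr :: "(klat \<times> klat) set \<Rightarrow> klat set" where
  "sr \<Gamma> = snd ` \<Gamma>"

definition units_GK :: "complex set \<Rightarrow> (klat \<times> klat) set set" where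
  "units_GK K = {\<Gamma> \<in> GK K. \<exists>L. (L, L) \<in> \<Gamma>}"

definition G1 :: "complex set \<Rightarrow> (klat \<times> klat) set set" where
  "G1 K = {\<Gamma> \<in> GK K. rg \<Gamma> \<in> Xset K - Fset K \<and> sr \<Gamma> \<in> Xset K - Fset K}"

end

theory Submission
  imports Defs
begin

lemma of_rat_complex: "(of_rat r :: complex) = complex_of_real (of_rat r)"
proof -
  obtain a b where r: "r = Fract a b" "b \<noteq> 0" by (cases r) auto
  have 1: "(of_rat r :: complex) = of_int a / of_int b" using r by (simp add: of_rat_rat)
  have 2: "(of_rat r :: real) = of_int a / of_int b" using r by (simp add: of_rat_rat)
  show ?thesis unfolding 1 2 by (simp add: of_real_divide)
qed

lemma Re_of_rat [simp]: "Re (of_rat r) = of_rat r"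
  by (metis of_rat_complex Re_complex_of_real)

lemma cnj_of_rat [simp]: "cnj (of_rat r) = of_rat r"
  by (metis of_rat_complex complex_cnj_complex_of_real)

lemma Im_of_rat [simp]: "Im (of_rat r) = 0"
  by (metis of_rat_complex Im_complex_of_real)

locale iqf =
  fixes K :: "complex set"
  assumes iqf: "imag_quadratic_field K"
begin

definition th :: complex where
  "th = (SOME \<theta>. \<theta> \<notin> \<real> \<and> K = {of_rat a + of_rat b * \<theta> | a b. True})"

lemma th: "th \<notin> \<real>" "K = {of_rat a + of_rat b * th | a b. True}"
proof -
  have "\<exists>\<theta>. \<theta> \<notin> \<real> \<and> K = {of_rat a + of_rat b * \<theta> | a b. True}"
    using iqf unfolding imag_quadratic_field_def by blast
  from someI_ex[OF this] show "th \<notin> \<real>" "K = {of_rat a + of_rat b * th | a b. True}"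
    unfolding th_def by blast+
qed

lemma K_mult: "x \<in> K \<Longrightarrow> y \<in> K \<Longrightarrow> x * y \<in> K"
  using iqf unfolding imag_quadratic_field_def by blast

lemma K_inverse: "x \<in> K \<Longrightarrow> inverse x \<in> K"
  using iqf unfolding imag_quadratic_field_def by blast

lemma K_divide: "x \<in> K \<Longrightarrow> y \<in> K \<Longrightarrow> x / y \<in> K"
  by (simp add: divide_inverse K_mult K_inverse)

lemma K_memI: "of_rat a + of_rat b * th \<in> K"
  using th(2) by blast

lemma K_memE: assumes "x \<in> K" obtains a b where "x = of_rat a + of_rat b * th"
  using assms th(2) by blast

lemma K_add: "x \<in> K \<Longrightarrow> y \<in> K \<Longrightarrow> x + y \<in> K"
proof -
  assume "x \<in> K" "y \<in> K"
  then obtain a b c d where "x = of_rat a + of_rat b * th" "y = of_rat c + of_rat d * th"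
    by (metis K_memE)
  then have "x + y = of_rat (a + c) + of_rat (b + d) * th"
    by (simp add: of_rat_add algebra_simps)
  then show ?thesis using K_memI by simp
qed

lemma K_uminus: "x \<in> K \<Longrightarrow> - x \<in> K"
proof -
  assume "x \<in> K"
  then obtain a b where "x = of_rat a + of_rat b * th" by (metis K_memE)
  then have "- x = of_rat (- a) + of_rat (- b) * th"
    by (simp add: of_rat_minus algebra_simps)
  then show ?thesis using K_memI by simp
qed

lemma K_diff: "x \<in> K \<Longrightarrow> y \<in> K \<Longrightarrow> x - y \<in> K"
  using K_add[of x "-y"] K_uminus[of y] by simp

lemma K_rat: "of_rat r \<in> K"
  using K_memI[of r 0] by simp

lemma K_0: "0 \<in> K" using K_rat[of 0] by simp
lemma K_1: "1 \<in> K" using K_rat[of 1] by simp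

lemma K_of_int: "of_int n \<in> K"
  using K_rat[of "of_int n"] by simp

lemma K_of_nat: "of_nat n \<in> K"
  using K_rat[of "of_nat n"] by simp

lemma K_th: "th \<in> K" using K_memI[of 0 1] by simp

lemma K_Rats: "x \<in> \<rat> \<Longrightarrow> x \<in> K"
  by (auto elim!: Rats_cases intro: K_rat)

lemma Im_th: "Im th \<noteq> 0"
  using th(1) complex_is_Real_iff by blast

lemma K_real: assumes "x \<in> K" "x \<in> \<real>" shows "x \<in> \<rat>"
proof -
  obtain a b where x: "x = of_rat a + of_rat b * th" using assms(1) by (metis K_memE)
  have "Im x = 0" using assms(2) complex_is_Real_iff by blast
  moreover have "Im x = of_rat b * Im th" using x
    by (simp add: x)
  ultimately have "b = 0" using Im_th by simp
  then show ?thesis using x by simp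
qed

lemma cnj_th: "cnj th \<in> K"
proof -
  have "th * th \<in> K" using K_mult K_th by blast
  then obtain p q where pq: "th * th = of_rat p + of_rat q * th" by (metis K_memE)
  have "cnj (th * th) = cnj (of_rat p + of_rat q * th)" using pq by simp
  then have pq': "cnj th * cnj th = of_rat p + of_rat q * cnj th"
    by simp
  have "(th - cnj th) * (th + cnj th - of_rat q) = 0"
    using pq pq' by (simp add: algebra_simps)
  moreover have "th \<noteq> cnj th" using th(1) Reals_cnj_iff by metis
  ultimately have "th + cnj th = of_rat q" by simp
  then have "cnj th = of_rat q - th" by (simp add: algebra_simps)
  then show ?thesis using K_diff K_rat K_th by simp
qed

lemma K_cnj: assumes "x \<in> K" shows "cnj x \<in> K"
proof -
  obtain a b where x: "x = of_rat a + of_rat b * th" using assms by (metis K_memE)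
  have "cnj x = of_rat a + of_rat b * cnj th"
    using x by simp
  then show ?thesis using K_add K_mult K_rat cnj_th by simp
qed

lemma K_tr: "x \<in> K \<Longrightarrow> x + cnj x \<in> \<rat>"
  by (intro K_real K_add K_cnj) (auto simp: Reals_cnj_iff)

lemma K_nm: "x \<in> K \<Longrightarrow> x * cnj x \<in> \<rat>"
  by (intro K_real K_mult K_cnj) (auto simp: Reals_cnj_iff)

end

definition Cint :: "complex \<Rightarrow> bool" where
  "Cint x \<longleftrightarrow> x + cnj x \<in> \<int> \<and> x * cnj x \<in> \<int>"

lemma quad_alg_int:
  fixes s A B :: complex
  assumes "A \<in> \<int>" "B \<in> \<int>" "s * s - A * s + B = 0"
  shows "algebraic_int s"
proof (rule algebraic_int.intros[of "[:B, -A, 1:]"])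
  show "lead_coeff [:B, - A, 1:] = 1" by simp
  show "\<forall>i. coeff [:B, - A, 1:] i \<in> \<int>"
    using assms by (auto simp: coeff_pCons split: nat.splits)
  show "poly [:B, - A, 1:] s = 0" using assms(3) by (simp add: algebra_simps)
qed

lemma quad_int:
  fixes s A B :: complex
  assumes "s \<in> \<rat>" "A \<in> \<int>" "B \<in> \<int>" "s * s - A * s + B = 0"
  shows "s \<in> \<int>"
  using rational_algebraic_int_is_int[OF quad_alg_int[OF assms(2-4)] assms(1)] .

lemma Cint_alg: "Cint x \<Longrightarrow> algebraic_int x"
  unfolding Cint_def
  by (rule quad_alg_int[of "x + cnj x" "x * cnj x"]) (auto simp: algebra_simps)

lemma Rats_denom:
  assumes "(q::complex) \<in> \<rat>" shows "\<exists>A::int. A > 0 \<and> of_int A * q \<in> \<int>"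
proof -
  from assms obtain a b where "b > 0" "coprime a b" "q = of_int a / of_int b" by (meson Rats_cases')
  then show ?thesis by (intro exI[of _ b]) auto
qed

lemma ev_mult:
  "poly (map_poly (of_int :: int \<Rightarrow> complex) (p * q)) x =
   poly (map_poly of_int p) x * poly (map_poly of_int q) x"
proof -
  have "map_poly (of_int :: int \<Rightarrow> complex) (p * q) = map_poly of_int p * map_poly of_int q"
    by (rule poly_eqI) (simp add: coeff_map_poly coeff_mult of_int_sum)
  then show ?thesis by simp
qed

lemma ev_add:
  "poly (map_poly (of_int :: int \<Rightarrow> complex) (p + q)) x =
   poly (map_poly of_int p) x + poly (map_poly of_int q) x"
proof -
  have "map_poly (of_int :: int \<Rightarrow> complex) (p + q) = map_poly of_int p + map_poly of_int q"
    by (rule poly_eqI) (simp add: coeff_map_poly)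
  then show ?thesis by simp
qed

lemma ev_smult:
  "poly (map_poly (of_int :: int \<Rightarrow> complex) (smult a p)) x =
   of_int a * poly (map_poly of_int p) x"
proof -
  have "map_poly (of_int :: int \<Rightarrow> complex) (smult a p) = smult (of_int a) (map_poly of_int p)"
    by (rule poly_eqI) (simp add: coeff_map_poly)
  then show ?thesis by simp
qed

context iqf
begin

lemma alg_Cint_nonreal:
  assumes xK: "x \<in> K" and alg: "algebraic_int x" and nr: "x \<notin> \<real>"
  shows "Cint x"
proof -
  define t where "t = x + cnj x"
  define n where "n = x * cnj x"
  have tQ: "t \<in> \<rat>" unfolding t_def using K_tr[OF xK] .
  have nQ: "n \<in> \<rat>" unfolding n_def using K_nm[OF xK] .
  obtain A1 where A1: "A1 > 0" "of_int A1 * t \<in> \<int>" using Rats_denom[OF tQ] by blast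
  obtain A2 where A2: "A2 > 0" "of_int A2 * n \<in> \<int>" using Rats_denom[OF nQ] by blast
  define A where "A = A1 * A2"
  have Apos: "A > 0" using A1 A2 unfolding A_def by simp
  have "of_int A * t = of_int A2 * (of_int A1 * t)" unfolding A_def by (simp add: algebra_simps)
  then have "of_int A * t \<in> \<int>" using A1(2) by (metis Ints_mult Ints_of_int)
  then obtain a1 where a1: "of_int a1 = of_int A * t" by (metis Ints_cases)
  have "of_int A * n = of_int A1 * (of_int A2 * n)" unfolding A_def by (simp add: algebra_simps)
  then have "of_int A * n \<in> \<int>" using A2(2) by (metis Ints_mult Ints_of_int)
  then obtain a0 where a0: "of_int a0 = of_int A * n" by (metis Ints_cases)
  define M :: "int poly" where "M = [:a0, -a1, A:]"
  let ?ev = "\<lambda>p::int poly. poly (map_poly (of_int :: int \<Rightarrow> complex) p) x"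
  have evM: "?ev M = 0"
    unfolding M_def using a0 a1 by (simp add: t_def n_def map_poly_pCons algebra_simps)
  obtain P where P: "poly (map_poly of_int P) x = 0" "lead_coeff P = 1"
    using alg algebraic_int_altdef_ipoly by blast
  have M0: "M \<noteq> 0" using Apos unfolding M_def by simp
  have degM: "degree M = 2" using Apos unfolding M_def by simp
  define R where "R = pseudo_mod P M"
  obtain a Q where aQ: "a \<noteq> 0" "smult a P = M * Q + R"
    using pseudo_mod(1)[OF M0] unfolding R_def by blast
  have degR: "R = 0 \<or> degree R < 2"
    using pseudo_mod(2)[OF M0] unfolding R_def degM by blast
  have "?ev (smult a P) = ?ev (M * Q + R)" using aQ by simp
  then have evR: "?ev R = 0" using P evM by (simp add: ev_smult ev_add ev_mult)
  have R0: "R = 0"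
  proof -
    have dR: "degree R \<le> 1" using degR by auto
    have Rform: "R = [:coeff R 0, coeff R 1:]"
      by (rule poly_eqI) (use dR in \<open>auto simp: coeff_pCons coeff_eq_0 split: nat.splits\<close>)
    have "?ev R = of_int (coeff R 0) + x * of_int (coeff R 1)"
      by (subst Rform) (simp add: map_poly_pCons)
    then have e: "of_int (coeff R 0) + x * of_int (coeff R 1) = 0" using evR by simp
    have c1: "coeff R 1 = 0"
    proof (rule ccontr)
      assume "coeff R 1 \<noteq> 0"
      then have "x = - of_int (coeff R 0) / of_int (coeff R 1)"
        using e by (simp add: field_simps add_eq_0_iff)
      then have "x \<in> \<real>" by simp
      then show False using nr by simp
    qed
    then have "coeff R 0 = 0" using e by simp
    then show ?thesis using c1 by (subst Rform) simp
  qed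
  have PQ: "smult a P = M * Q" using aQ R0 by simp
  have P0: "P \<noteq> 0" using P(2) by auto
  have Q0: "Q \<noteq> 0" using PQ aQ(1) P0 by auto
  have cP: "content P = 1"
  proof -
    have "content P dvd 1" using content_dvd_coeff[of P "degree P"] P(2) by simp
    then show ?thesis by (metis is_unit_normalize normalize_content)
  qed
  have cc: "content M * content Q = \<bar>a\<bar>"
    using arg_cong[OF PQ, of content] cP by (simp add: content_mult)
  have lM: "lead_coeff M = A" using degM by (simp add: M_def numeral_2_eq_2)
  have "lead_coeff (smult a P) = a" using P(2) by (simp add: lead_coeff_smult)
  then have lc: "a = A * lead_coeff Q"
    using arg_cong[OF PQ, of lead_coeff] lM by (simp only: lead_coeff_mult)
  have cMA: "content M dvd A"
    using content_dvd_coeff[of M "degree M"] lM by simp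
  have cQ: "content Q dvd lead_coeff Q" by (rule content_dvd_coeff)
  have lQ0: "lead_coeff Q \<noteq> 0" using Q0 by simp
  have cMpos: "content M > 0" using M0
    by (metis content_eq_zero_iff normalize_content abs_of_nonneg le_less not_le abs_ge_zero normalize_int_def)
  have cQpos: "content Q > 0" using Q0
    by (metis content_eq_zero_iff normalize_content abs_of_nonneg le_less not_le abs_ge_zero normalize_int_def)
  have le1: "content M \<le> A" using cMA Apos cMpos by (simp add: zdvd_imp_le)
  have le2: "content Q \<le> \<bar>lead_coeff Q\<bar>" using cQ lQ0 cQpos
    by (simp add: zdvd_imp_le)
  have eqA: "content M = A"
  proof (rule ccontr)
    assume "content M \<noteq> A"
    then have "content M < A" using le1 by simp
    then have "content M * content Q < A * content Q" using cQpos by simp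
    also have "\<dots> \<le> A * \<bar>lead_coeff Q\<bar>" using le2 Apos by simp
    finally show False using cc lc Apos by (simp add: abs_mult)
  qed
  have "A dvd coeff M 1" using content_dvd_coeff[of M 1] eqA by simp
  moreover have "coeff M 1 = - a1" by (simp add: M_def)
  ultimately have "A dvd a1" by simp
  then obtain k1 where "a1 = A * k1" by blast
  then have "of_int A * t = of_int A * of_int k1" using a1 by (simp del: of_int_mult add: of_int_mult[symmetric])
  then have "t = of_int k1" using Apos by simp
  then have tZ: "t \<in> \<int>" by simp
  have "A dvd coeff M 0" using content_dvd_coeff[of M 0] eqA by simp
  moreover have "coeff M 0 = a0" by (simp add: M_def)
  ultimately have "A dvd a0" by simp
  then obtain k0 where "a0 = A * k0" by blast
  then have "of_int A * n = of_int A * of_int k0" using a0 by (simp del: of_int_mult add: of_int_mult[symmetric])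
  then have "n = of_int k0" using Apos by simp
  then have nZ: "n \<in> \<int>" by simp
  show ?thesis using tZ nZ unfolding Cint_def t_def n_def by simp
qed

end

context iqf
begin

lemma alg_Cint: assumes "x \<in> K" "algebraic_int x" shows "Cint x"
proof (cases "x \<in> \<real>")
  case True
  then have "x \<in> \<rat>" using K_real assms(1) by blast
  then have "x \<in> \<int>" using rational_algebraic_int_is_int assms(2) by blast
  then obtain k where k: "x = of_int k" by (metis Ints_cases)
  then show ?thesis unfolding Cint_def by simp
next
  case False
  then show ?thesis using alg_Cint_nonreal assms by blast
qed

lemma OK_iff: "x \<in> OK K \<longleftrightarrow> x \<in> K \<and> Cint x"
  unfolding OK_def using alg_Cint Cint_alg by blast

lemma Cint_add_mult:
  assumes xK: "x \<in> K" and yK: "y \<in> K" and cx: "Cint x" and cy: "Cint y"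
  shows "Cint (x + y)" "Cint (x * y)"
proof -
  define s where "s = x * cnj y + cnj x * y"
  define s' where "s' = x * y + cnj x * cnj y"
  have sK: "s \<in> K" unfolding s_def by (intro K_add K_mult K_cnj xK yK)
  have "cnj s = s" unfolding s_def by (simp add: algebra_simps)
  then have "s \<in> \<real>" using Reals_cnj_iff by blast
  then have sQ: "s \<in> \<rat>" using K_real sK by blast
  have tx: "x + cnj x \<in> \<int>" and nx: "x * cnj x \<in> \<int>" using cx unfolding Cint_def by auto
  have ty: "y + cnj y \<in> \<int>" and ny: "y * cnj y \<in> \<int>" using cy unfolding Cint_def by auto
  have sum: "s + s' = (x + cnj x) * (y + cnj y)" unfolding s_def s'_def by (simp add: algebra_simps)
  have sumZ: "s + s' \<in> \<int>" unfolding sum using tx ty by (rule Ints_mult)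
  have prod: "s * s' = (y * cnj y) * ((x + cnj x) * (x + cnj x) - 2 * (x * cnj x))
               + (x * cnj x) * ((y + cnj y) * (y + cnj y) - 2 * (y * cnj y))"
    unfolding s_def s'_def by (simp add: algebra_simps)
  have prodZ: "s * s' \<in> \<int>" unfolding prod
    by (rule Ints_add[OF Ints_mult[OF ny Ints_diff[OF Ints_mult[OF tx tx] Ints_mult[OF Ints_numeral nx]]]
                         Ints_mult[OF nx Ints_diff[OF Ints_mult[OF ty ty] Ints_mult[OF Ints_numeral ny]]]])
  have "s * s - (s + s') * s + s * s' = 0" by (simp add: algebra_simps)
  then have sZ: "s \<in> \<int>" using quad_int[OF sQ sumZ prodZ] by blast
  have s'Z: "s' \<in> \<int>" using Ints_diff[OF sumZ sZ] by simp
  have "(x + y) + cnj (x + y) = (x + cnj x) + (y + cnj y)" by simp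
  then have t1: "(x + y) + cnj (x + y) \<in> \<int>" using tx ty by (metis Ints_add)
  have "(x + y) * cnj (x + y) = x * cnj x + y * cnj y + s" unfolding s_def by (simp add: algebra_simps)
  then have n1: "(x + y) * cnj (x + y) \<in> \<int>" using nx ny sZ by (metis Ints_add)
  show "Cint (x + y)" unfolding Cint_def using t1 n1 by blast
  have "(x * y) + cnj (x * y) = s'" unfolding s'_def by simp
  then have t2: "(x * y) + cnj (x * y) \<in> \<int>" using s'Z by simp
  have "(x * y) * cnj (x * y) = (x * cnj x) * (y * cnj y)" by (simp add: algebra_simps)
  then have n2: "(x * y) * cnj (x * y) \<in> \<int>" using nx ny by (metis Ints_mult)
  show "Cint (x * y)" unfolding Cint_def using t2 n2 by blast
qed

lemma O_add: "x \<in> OK K \<Longrightarrow> y \<in> OK K \<Longrightarrow> x + y \<in> OK K"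
  using Cint_add_mult(1) K_add unfolding OK_iff by blast

lemma O_mult: "x \<in> OK K \<Longrightarrow> y \<in> OK K \<Longrightarrow> x * y \<in> OK K"
  using Cint_add_mult(2) K_mult unfolding OK_iff by blast

lemma O_of_int: "of_int k \<in> OK K"
  unfolding OK_iff Cint_def using K_of_int by simp

lemma O_of_nat: "of_nat k \<in> OK K"
  using O_of_int[of "int k"] by simp

lemma O_0: "0 \<in> OK K" using O_of_int[of 0] by simp
lemma O_1: "1 \<in> OK K" using O_of_int[of 1] by simp

lemma O_uminus: "x \<in> OK K \<Longrightarrow> - x \<in> OK K"
  using O_mult[OF O_of_int[of "-1"], of x] by simp

lemma O_diff: "x \<in> OK K \<Longrightarrow> y \<in> OK K \<Longrightarrow> x - y \<in> OK K"
  using O_add[of x "-y"] O_uminus[of y] by simp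

lemma O_K: "x \<in> OK K \<Longrightarrow> x \<in> K"
  unfolding OK_def by simp

lemma O_cnj: "x \<in> OK K \<Longrightarrow> cnj x \<in> OK K"
  unfolding OK_def using K_cnj by auto

lemma O_sum: "finite S \<Longrightarrow> (\<And>s. s \<in> S \<Longrightarrow> f s \<in> OK K) \<Longrightarrow> sum f S \<in> OK K"
  by (induct S rule: finite_induct) (auto intro: O_add O_0)

lemma O_norm: assumes "x \<in> OK K" "x \<noteq> 0" shows "norm x \<ge> 1"
proof -
  have "x * cnj x \<in> \<int>" using assms(1) unfolding OK_iff Cint_def by auto
  then obtain k where k: "x * cnj x = of_int k" by (metis Ints_cases)
  have "x * cnj x = complex_of_real ((norm x)^2)" by (metis complex_norm_square of_real_power)
  then have nk: "(norm x)^2 = of_int k" using k by (metis of_real_eq_iff of_real_of_int_eq)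
  have "norm x > 0" using assms(2) by simp
  then have "(norm x)^2 > 0" by simp
  then have "real_of_int k > 0" using nk by simp
  then have "k \<ge> 1" by simp
  then have "(norm x)^2 \<ge> 1" using nk by simp
  then show ?thesis by (metis norm_ge_zero one_power2 power2_le_imp_le zero_le_one)
qed

lemma O_denom: assumes "k \<in> K" shows "\<exists>n::nat. n > 0 \<and> of_nat n * k \<in> OK K"
proof -
  obtain A1 where A1: "A1 > 0" "of_int A1 * (k + cnj k) \<in> \<int>" using Rats_denom[OF K_tr[OF assms]] by blast
  obtain A2 where A2: "A2 > 0" "of_int A2 * (k * cnj k) \<in> \<int>" using Rats_denom[OF K_nm[OF assms]] by blast
  define n where "n = nat (A1 * A2)"
  have n: "(of_nat n :: complex) = of_int A1 * of_int A2" unfolding n_def using A1 A2 by simp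
  have npos: "n > 0" unfolding n_def using A1 A2 by simp
  have "of_nat n * k + cnj (of_nat n * k) = of_int A2 * (of_int A1 * (k + cnj k))"
    using n by (simp add: algebra_simps)
  then have t: "of_nat n * k + cnj (of_nat n * k) \<in> \<int>" using A1 by (metis Ints_mult Ints_of_int)
  have "(of_nat n * k) * cnj (of_nat n * k) = (of_int A1 * of_int A1 * of_int A2) * (of_int A2 * (k * cnj k))"
    using n by (simp add: algebra_simps)
  then have m: "(of_nat n * k) * cnj (of_nat n * k) \<in> \<int>" using A2 by (metis Ints_mult Ints_of_int)
  have "of_nat n * k \<in> K" using K_mult K_of_nat assms by blast
  then have "of_nat n * k \<in> OK K" unfolding OK_iff Cint_def using t m by blast
  then show ?thesis using npos by blast
qed

lemma O_nonreal: "\<exists>t \<in> OK K. t \<notin> \<real>"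
proof -
  obtain n :: nat where n: "n > 0" "of_nat n * th \<in> OK K" using O_denom[OF K_th] by blast
  have "of_nat n * th \<notin> \<real>"
  proof
    assume "of_nat n * th \<in> \<real>"
    then have "Im (of_nat n * th) = 0" using complex_is_Real_iff by blast
    then show False using n(1) Im_th by simp
  qed
  then show ?thesis using n by blast
qed

end

context iqf
begin

definition olat :: "complex set \<Rightarrow> bool" where
  "olat \<Lambda> \<longleftrightarrow> (\<exists>S. finite S \<and> \<Lambda> = {\<Sum>s\<in>S. a s * s | a. \<forall>s\<in>S. a s \<in> OK K}) \<and>
     \<Lambda> \<noteq> {0} \<and> (\<exists>w. \<Lambda> \<subseteq> {k * w | k. k \<in> K})"

lemma klat_olat: "is_klattice K L \<Longrightarrow> olat (fst L)"
  unfolding is_klattice_def olat_def Let_def by blast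

lemma klatD:
  assumes "is_klattice K L"
  shows "\<forall>x\<in>K. snd L x \<in> Kspan K (fst L)"
    "\<forall>x\<in>K. \<forall>y\<in>K. x - y \<in> OK K \<longrightarrow> snd L x - snd L y \<in> fst L"
    "\<forall>x\<in>K. \<forall>y\<in>K. snd L (x + y) - snd L x - snd L y \<in> fst L"
    "\<forall>a\<in>OK K. \<forall>x\<in>K. snd L (a * x) - a * snd L x \<in> fst L"
  using assms unfolding is_klattice_def Let_def by blast+

context
  fixes \<Lambda> assumes lat: "olat \<Lambda>"
begin

lemma lat_S: obtains S where "finite S" "\<Lambda> = {\<Sum>s\<in>S. a s * s | a. \<forall>s\<in>S. a s \<in> OK K}"
  using lat unfolding olat_def by blast

lemma lat_memI:
  assumes "\<Lambda> = {\<Sum>s\<in>S. a s * s | a. \<forall>s\<in>S. a s \<in> OK K}" "\<forall>s\<in>S. b s \<in> OK K"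
  shows "(\<Sum>s\<in>S. b s * s) \<in> \<Lambda>"
  unfolding assms(1) using assms(2) by blast

lemma lat_0: "0 \<in> \<Lambda>"
proof -
  obtain S where S: "finite S" "\<Lambda> = {\<Sum>s\<in>S. a s * s | a. \<forall>s\<in>S. a s \<in> OK K}" by (rule lat_S)
  show ?thesis unfolding S(2) using O_0 by (intro CollectI exI[of _ "\<lambda>_. 0"]) auto
qed

lemma lat_add: assumes "x \<in> \<Lambda>" "y \<in> \<Lambda>" shows "x + y \<in> \<Lambda>"
proof -
  obtain S where S: "finite S" "\<Lambda> = {\<Sum>s\<in>S. a s * s | a. \<forall>s\<in>S. a s \<in> OK K}" by (rule lat_S)
  from assms obtain a b where ab: "x = (\<Sum>s\<in>S. a s * s)" "\<forall>s\<in>S. a s \<in> OK K"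
    "y = (\<Sum>s\<in>S. b s * s)" "\<forall>s\<in>S. b s \<in> OK K" unfolding S(2) by blast
  have "x + y = (\<Sum>s\<in>S. (a s + b s) * s)" using ab by (simp add: sum.distrib distrib_right)
  moreover have "\<forall>s\<in>S. a s + b s \<in> OK K" using ab O_add by blast
  ultimately show ?thesis using lat_memI[OF S(2), of "\<lambda>s. a s + b s"] by simp
qed

lemma lat_smult: assumes "c \<in> OK K" "x \<in> \<Lambda>" shows "c * x \<in> \<Lambda>"
proof -
  obtain S where S: "finite S" "\<Lambda> = {\<Sum>s\<in>S. a s * s | a. \<forall>s\<in>S. a s \<in> OK K}" by (rule lat_S)
  from assms obtain a where ab: "x = (\<Sum>s\<in>S. a s * s)" "\<forall>s\<in>S. a s \<in> OK K"
    unfolding S(2) by blast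
  have "c * x = (\<Sum>s\<in>S. (c * a s) * s)" using ab by (simp add: sum_distrib_left mult.assoc)
  moreover have "\<forall>s\<in>S. c * a s \<in> OK K" using ab O_mult assms(1) by blast
  ultimately show ?thesis using lat_memI[OF S(2), of "\<lambda>s. c * a s"] by simp
qed

lemma lat_uminus: "x \<in> \<Lambda> \<Longrightarrow> - x \<in> \<Lambda>"
  using lat_smult[OF O_of_int[of "-1"]] by simp

lemma lat_diff: "x \<in> \<Lambda> \<Longrightarrow> y \<in> \<Lambda> \<Longrightarrow> x - y \<in> \<Lambda>"
  using lat_add[of x "-y"] lat_uminus[of y] by simp

lemma lat_of_int: "x \<in> \<Lambda> \<Longrightarrow> of_int k * x \<in> \<Lambda>"
  using lat_smult[OF O_of_int] .

lemma lat_of_nat: "x \<in> \<Lambda> \<Longrightarrow> of_nat k * x \<in> \<Lambda>"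
  using lat_smult[OF O_of_nat] .

lemma lat_S_sub: assumes "finite S" "\<Lambda> = {\<Sum>s\<in>S. a s * s | a. \<forall>s\<in>S. a s \<in> OK K}"
  shows "S \<subseteq> \<Lambda>"
proof
  fix s assume s: "s \<in> S"
  have "(\<Sum>t\<in>S. (if t = s then 1 else 0) * t) = (\<Sum>t\<in>S. (if t = s then t else 0))"
    by (intro sum.cong) auto
  also have "\<dots> = s" using s assms(1) by simp
  finally have e: "(\<Sum>t\<in>S. (if t = s then 1 else 0) * t) = s" .
  have "\<forall>t\<in>S. (if t = s then 1 else 0) \<in> OK K" using O_0 O_1 by auto
  from lat_memI[OF assms(2) this] show "s \<in> \<Lambda>" unfolding e .
qed

lemma lat_nonzero: "\<exists>l\<in>\<Lambda>. l \<noteq> 0"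
  using lat lat_0 unfolding olat_def by blast

lemma lat_w: "\<exists>w. w \<noteq> 0 \<and> \<Lambda> \<subseteq> {k * w | k. k \<in> K}"
proof -
  obtain w where w: "\<Lambda> \<subseteq> {k * w | k. k \<in> K}" using lat unfolding olat_def by blast
  obtain l where "l \<in> \<Lambda>" "l \<noteq> 0" using lat_nonzero by blast
  then have "w \<noteq> 0" using w by auto
  then show ?thesis using w by blast
qed

lemma lat_denom:
  assumes w: "w \<noteq> 0" "\<Lambda> \<subseteq> {k * w | k. k \<in> K}"
  shows "\<exists>n::nat. n > 0 \<and> (\<forall>l\<in>\<Lambda>. \<exists>u\<in>OK K. of_nat n * l = u * w)"
proof -
  obtain S where S: "finite S" "\<Lambda> = {\<Sum>s\<in>S. a s * s | a. \<forall>s\<in>S. a s \<in> OK K}" by (rule lat_S)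
  have SL: "S \<subseteq> \<Lambda>" by (rule lat_S_sub[OF S])
  define P where "P = (\<lambda>(n::nat) s. \<exists>u\<in>OK K. of_nat n * s = u * w)"
  have Pmult: "P (m * n) s" if "P n s" for m n s
  proof -
    from that obtain u where uo: "u \<in> OK K" "of_nat n * s = u * w" unfolding P_def by blast
    have "of_nat (m * n) * s = (of_nat m * u) * w" using uo(2) by (simp add: algebra_simps)
    moreover have "of_nat m * u \<in> OK K" using O_mult[OF O_of_nat uo(1)] .
    ultimately show ?thesis unfolding P_def by blast
  qed
  have base: "\<exists>n>0. P n s" if "s \<in> S" for s
  proof -
    from that SL w obtain k where k: "k \<in> K" "s = k * w" by blast
    obtain n where n: "n > 0" "of_nat n * k \<in> OK K" using O_denom[OF k(1)] by blast
    have "of_nat n * s = (of_nat n * k) * w" using k by (simp add: algebra_simps)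
    then show ?thesis using n unfolding P_def by blast
  qed
  have "\<exists>n>0. \<forall>s\<in>S. P n s" using S(1) base
  proof (induct S rule: finite_induct)
    case empty then show ?case by (intro exI[of _ 1]) auto
  next
    case (insert x F)
    then obtain n where n: "n > 0" "\<forall>s\<in>F. P n s" by blast
    obtain m where m: "m > 0" "P m x" using insert by blast
    have "P (m * n) x" using Pmult[of m x n] m(2) by (simp add: mult.commute)
    moreover have "\<forall>s\<in>F. P (m * n) s" using n(2) Pmult[of n _ m] by blast
    ultimately have "\<forall>s\<in>insert x F. P (m * n) s" by blast
    then show ?case using n m by (intro exI[of _ "m * n"]) auto
  qed
  then obtain n where n: "n > 0" "\<forall>s\<in>S. P n s" by blast
  then obtain f where f: "\<forall>s\<in>S. f s \<in> OK K \<and> of_nat n * s = f s * w"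
    unfolding P_def by metis
  have "\<exists>u\<in>OK K. of_nat n * l = u * w" if "l \<in> \<Lambda>" for l
  proof -
    from that obtain a where a: "l = (\<Sum>s\<in>S. a s * s)" "\<forall>s\<in>S. a s \<in> OK K" unfolding S(2) by blast
    have "of_nat n * l = (\<Sum>s\<in>S. a s * (of_nat n * s))" using a(1)
      by (simp add: sum_distrib_left algebra_simps)
    also have "\<dots> = (\<Sum>s\<in>S. a s * (f s * w))" using f by (intro sum.cong) auto
    also have "\<dots> = (\<Sum>s\<in>S. a s * f s) * w" by (simp add: sum_distrib_right mult.assoc)
    finally have "of_nat n * l = (\<Sum>s\<in>S. a s * f s) * w" .
    moreover have "(\<Sum>s\<in>S. a s * f s) \<in> OK K" using S(1) a(2) f by (intro O_sum O_mult) auto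
    ultimately show ?thesis by blast
  qed
  then show ?thesis using n(1) by blast
qed

lemma lat_discrete: "\<exists>d>0. \<forall>l\<in>\<Lambda>. l \<noteq> 0 \<longrightarrow> d \<le> norm l"
proof -
  obtain w where w: "w \<noteq> 0" "\<Lambda> \<subseteq> {k * w | k. k \<in> K}" using lat_w by blast
  obtain n where n: "n > 0" "\<forall>l\<in>\<Lambda>. \<exists>u\<in>OK K. of_nat n * l = u * w" using lat_denom[OF w] by blast
  have "norm w / real n \<le> norm l" if lh: "l \<in> \<Lambda>" "l \<noteq> 0" for l
  proof -
    obtain u where uo: "u \<in> OK K" "of_nat n * l = u * w" using bspec[OF n(2) lh(1)] by blast
    have "of_nat n * l \<noteq> 0" using lh(2) n(1) by simp
    then have "u \<noteq> 0" using uo(2) by auto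
    then have u1: "norm u \<ge> 1" using O_norm uo(1) by blast
    have "norm (of_nat n * l) = norm (u * w)" using uo(2) by simp
    then have e: "real n * norm l = norm u * norm w" by (simp only: norm_mult norm_of_nat)
    have "norm w \<le> norm u * norm w" using u1 by (simp add: mult_le_cancel_right1)
    then have "norm w \<le> real n * norm l" using e by simp
    then show ?thesis using n(1) by (simp add: divide_le_eq mult.commute)
  qed
  moreover have "norm w / real n > 0" using w n by simp
  ultimately show ?thesis by blast
qed

lemma lat_contains:
  assumes w: "\<Lambda> \<subseteq> {k * w | k. k \<in> K}"
  shows "\<exists>t::nat. t > 0 \<and> (\<forall>u\<in>OK K. of_nat t * u * w \<in> \<Lambda>)"
proof -
  obtain l where l: "l \<in> \<Lambda>" "l \<noteq> 0" using lat_nonzero by blast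
  then obtain k where k: "k \<in> K" "l = k * w" using w by blast
  have k0: "k \<noteq> 0" using k l by auto
  obtain t where t: "t > 0" "of_nat t * inverse k \<in> OK K" using O_denom[OF K_inverse[OF k(1)]] by blast
  have "of_nat t * u * w \<in> \<Lambda>" if "u \<in> OK K" for u
  proof -
    have "of_nat t * u * w = (of_nat t * inverse k * u) * l" using k k0 by (simp add: field_simps)
    moreover have "of_nat t * inverse k * u \<in> OK K" using O_mult t(2) that by blast
    ultimately show ?thesis using lat_smult l(1) by metis
  qed
  then show ?thesis using t by blast
qed

end

lemma Kspan_sub: assumes "\<Lambda> \<subseteq> {k * w | k. k \<in> K}" shows "Kspan K \<Lambda> \<subseteq> {k * w | k. k \<in> K}"
proof
  fix z assume "z \<in> Kspan K \<Lambda>"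
  then obtain k x where kx: "k \<in> K" "x \<in> \<Lambda>" "z = k * x" unfolding Kspan_def by blast
  then obtain k' where "k' \<in> K" "x = k' * w" using assms by blast
  then have "z = (k * k') * w" "k * k' \<in> K" using kx K_mult by auto
  then show "z \<in> {k * w | k. k \<in> K}" by blast
qed

lemma sub_Kspan: "\<Lambda> \<subseteq> Kspan K \<Lambda>"
proof
  fix x assume "x \<in> \<Lambda>"
  then have "x = 1 * x \<and> 1 \<in> K \<and> x \<in> \<Lambda>" using K_1 by simp
  then show "x \<in> Kspan K \<Lambda>" unfolding Kspan_def by blast
qed

end

lemma real_linear_repr:
  fixes \<alpha> :: "complex \<Rightarrow> complex"
  assumes lin: "linear \<alpha>"
  shows "\<alpha> z = ((\<alpha> 1 - \<i> * \<alpha> \<i>) / 2) * z + ((\<alpha> 1 + \<i> * \<alpha> \<i>) / 2) * cnj z"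
proof -
  have z: "z = Re z *\<^sub>R 1 + Im z *\<^sub>R \<i>" by (simp add: complex_eq_iff)
  have "\<alpha> z = Re z *\<^sub>R \<alpha> 1 + Im z *\<^sub>R \<alpha> \<i>"
    by (subst z) (simp add: linear_add[OF lin] linear_cmul[OF lin])
  also have "\<dots> = of_real (Re z) * \<alpha> 1 + of_real (Im z) * \<alpha> \<i>"
    by (simp add: scaleR_conv_of_real)
  also have "\<dots> = ((\<alpha> 1 - \<i> * \<alpha> \<i>) / 2) * z + ((\<alpha> 1 + \<i> * \<alpha> \<i>) / 2) * cnj z"
    by (simp add: complex_eq_iff field_simps)
  finally show ?thesis .
qed

lemma clin:
  fixes \<alpha> :: "complex \<Rightarrow> complex" and \<Lambda> :: "complex set"
  assumes lin: "linear \<alpha>"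
    and e: "onorm (\<lambda>z. \<alpha> z - z) < \<epsilon>" and eps: "\<epsilon> \<le> 1/2"
    and d: "\<forall>l\<in>\<Lambda>. l \<noteq> 0 \<longrightarrow> \<delta> \<le> norm l"
    and l0: "l0 \<in> \<Lambda>" "l0 \<noteq> 0"
    and th: "\<theta> \<notin> \<real>" "\<theta> * l0 \<in> \<Lambda>"
    and img: "\<theta> * \<alpha> l0 \<in> \<alpha> ` \<Lambda>"
    and diff: "\<forall>x\<in>\<Lambda>. \<forall>y\<in>\<Lambda>. x - y \<in> \<Lambda>"
    and small: "4 * \<epsilon> * norm \<theta> * norm l0 < \<delta>"
  shows "\<alpha> z = \<alpha> 1 * z"
proof -
  have "linear (\<lambda>z. \<alpha> z - z)" using module_hom_sub[OF lin linear_id] by (simp add: id_def)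
  then have bl: "bounded_linear (\<lambda>z. \<alpha> z - z)" by (simp add: linear_conv_bounded_linear)
  have B: "norm (\<alpha> z - z) \<le> \<epsilon> * norm z" for z
  proof -
    have "norm (\<alpha> z - z) \<le> onorm (\<lambda>z. \<alpha> z - z) * norm z" using onorm[OF bl] .
    also have "\<dots> \<le> \<epsilon> * norm z" using e by (intro mult_right_mono) auto
    finally show ?thesis .
  qed
  have eps0: "\<epsilon> > 0" using e onorm_pos_le[OF bl] by linarith
  obtain \<mu> where mu: "\<mu> \<in> \<Lambda>" "\<theta> * \<alpha> l0 = \<alpha> \<mu>" using img by blast
  define dd where "dd = \<mu> - \<theta> * l0"
  have ddL: "dd \<in> \<Lambda>" unfolding dd_def using diff mu(1) th(2) by blast
  have adx: "\<alpha> dd = \<theta> * (\<alpha> l0 - l0) + (\<theta> * l0 - \<alpha> (\<theta> * l0))"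
    unfolding dd_def linear_diff[OF lin] mu(2)[symmetric] by (simp add: algebra_simps)
  have "norm (\<alpha> dd) \<le> norm (\<theta> * (\<alpha> l0 - l0)) + norm (\<theta> * l0 - \<alpha> (\<theta> * l0))"
    unfolding adx by (rule norm_triangle_ineq)
  also have "norm (\<theta> * (\<alpha> l0 - l0)) \<le> norm \<theta> * (\<epsilon> * norm l0)"
    unfolding norm_mult by (intro mult_left_mono B) auto
  also have "norm (\<theta> * l0 - \<alpha> (\<theta> * l0)) \<le> \<epsilon> * (norm \<theta> * norm l0)"
    using B[of "\<theta> * l0"] by (simp add: norm_minus_commute norm_mult)
  finally have n1: "norm (\<alpha> dd) \<le> 2 * \<epsilon> * norm \<theta> * norm l0" by (simp add: algebra_simps)
  have "norm dd \<le> norm (\<alpha> dd) + norm (\<alpha> dd - dd)"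
    using norm_triangle_ineq4[of "\<alpha> dd" "\<alpha> dd - dd"] by simp
  also have "\<dots> \<le> 2 * \<epsilon> * norm \<theta> * norm l0 + \<epsilon> * norm dd" using n1 B[of dd] by linarith
  finally have "norm dd \<le> 2 * \<epsilon> * norm \<theta> * norm l0 + \<epsilon> * norm dd" .
  then have "(1 - \<epsilon>) * norm dd \<le> 2 * \<epsilon> * norm \<theta> * norm l0" by (simp add: algebra_simps)
  moreover have "norm dd / 2 \<le> (1 - \<epsilon>) * norm dd" using mult_right_mono[of "1/2" "1 - \<epsilon>" "norm dd"] eps by simp
  ultimately have "norm dd \<le> 4 * \<epsilon> * norm \<theta> * norm l0" by linarith
  then have "norm dd < \<delta>" using small by linarith
  then have "dd = 0" using d ddL by force
  then have comm: "\<alpha> (\<theta> * l0) = \<theta> * \<alpha> l0" using mu(2) unfolding dd_def by simp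
  define p where "p = (\<alpha> 1 - \<i> * \<alpha> \<i>) / 2"
  define q where "q = (\<alpha> 1 + \<i> * \<alpha> \<i>) / 2"
  have R: "\<alpha> w = p * w + q * cnj w" for w unfolding p_def q_def by (rule real_linear_repr[OF lin])
  have "p * (\<theta> * l0) + q * cnj (\<theta> * l0) = \<theta> * (p * l0 + q * cnj l0)"
    using comm unfolding R .
  then have "q * cnj l0 * (cnj \<theta> - \<theta>) = 0" by (simp add: algebra_simps)
  moreover have "cnj \<theta> \<noteq> \<theta>" using th(1) Reals_cnj_iff by metis
  moreover have "cnj l0 \<noteq> 0" using l0(2) by simp
  ultimately have q0: "q = 0" by simp
  have "\<alpha> 1 = p" using R[of 1] q0 by simp
  then show ?thesis using R[of z] q0 by simp
qed

context iqf
begin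

lemma disj_main:
  assumes k1: "is_klattice K L1" and k2: "is_klattice K L2" and cm: "commens K L1 L2"
    and x2: "x2 \<in> K" "snd L2 x2 \<notin> fst L2"
    and nu: "\<not> (fst L1 = fst L2 \<and> (\<forall>x\<in>K. snd L1 x - snd L2 x \<in> fst L1))"
  shows "\<exists>N0::nat. N0 > 0 \<and> (\<forall>h. fst L1 = (*) h ` fst L2 \<longrightarrow>
            \<not> (\<forall>x\<in>K. of_nat N0 * x \<in> OK K \<longrightarrow> snd L1 x - h * snd L2 x \<in> fst L1))"
proof -
  define \<Lambda>1 where "\<Lambda>1 = fst L1"
  define \<Lambda>2 where "\<Lambda>2 = fst L2"
  define \<phi>1 where "\<phi>1 = snd L1"
  define \<phi>2 where "\<phi>2 = snd L2"
  have o1: "olat \<Lambda>1" unfolding \<Lambda>1_def using klat_olat[OF k1] .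
  have o2: "olat \<Lambda>2" unfolding \<Lambda>2_def using klat_olat[OF k2] .
  obtain w where w: "w \<noteq> 0" "\<Lambda>2 \<subseteq> {k * w | k. k \<in> K}" using lat_w[OF o2] by blast
  have ks: "Kspan K \<Lambda>1 = Kspan K \<Lambda>2" using cm unfolding commens_def \<Lambda>1_def \<Lambda>2_def by blast
  have w1: "\<Lambda>1 \<subseteq> {k * w | k. k \<in> K}"
    using sub_Kspan[of \<Lambda>1] Kspan_sub[OF w(2)] ks by blast
  obtain n1 where n1: "n1 > 0" "\<forall>l\<in>\<Lambda>1. \<exists>u\<in>OK K. of_nat n1 * l = u * w"
    using lat_denom[OF o1 w(1) w1] by blast
  obtain n2 where n2: "n2 > 0" "\<forall>l\<in>\<Lambda>2. \<exists>u\<in>OK K. of_nat n2 * l = u * w"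
    using lat_denom[OF o2 w] by blast
  define n where "n = n1 * n2"
  have npos: "n > 0" unfolding n_def using n1 n2 by simp
  have nL1: "\<exists>u\<in>OK K. of_nat n * l = u * w" if lh: "l \<in> \<Lambda>1" for l
  proof -
    obtain u where u: "u \<in> OK K" "of_nat n1 * l = u * w" using bspec[OF n1(2) lh] by blast
    have "of_nat n * l = (of_nat n2 * u) * w" unfolding n_def using u(2)
      by (simp add: algebra_simps)
    then show ?thesis using O_mult[OF O_of_nat u(1)] by blast
  qed
  have nL2: "\<exists>u\<in>OK K. of_nat n * l = u * w" if lh: "l \<in> \<Lambda>2" for l
  proof -
    obtain u where u: "u \<in> OK K" "of_nat n2 * l = u * w" using bspec[OF n2(2) lh] by blast
    have "of_nat n * l = (of_nat n1 * u) * w" unfolding n_def using u(2)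
      by (simp add: algebra_simps)
    then show ?thesis using O_mult[OF O_of_nat u(1)] by blast
  qed
  obtain t where t: "t > 0" "\<forall>u\<in>OK K. of_nat t * u * w \<in> \<Lambda>2"
    using lat_contains[OF o2 w(2)] by blast
  obtain \<delta> where \<delta>: "\<delta> > 0" "\<forall>l\<in>\<Lambda>2. l \<noteq> 0 \<longrightarrow> \<delta> \<le> norm l"
    using lat_discrete[OF o2] by blast
  have tw: "of_nat t * w \<in> \<Lambda>2" using t(2) O_1 by fastforce
  have tw0: "of_nat t * w \<noteq> 0" using t(1) w(1) by simp
  have L1ne: "\<Lambda>1 \<noteq> {0}" using o1 unfolding olat_def by blast
  have hne0: "h \<noteq> 0" if "\<Lambda>1 = (*) h ` \<Lambda>2" for h
  proof
    assume "h = 0"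
    then have "\<Lambda>1 \<subseteq> {0}" using that by auto
    then show False using L1ne lat_0[OF o1] by blast
  qed
  show ?thesis
  proof (cases "\<exists>h0. \<Lambda>1 = (*) h0 ` \<Lambda>2")
    case False
    then show ?thesis unfolding \<Lambda>1_def \<Lambda>2_def by (intro exI[of _ 1]) auto
  next
    case True
    then obtain h0 where h0: "\<Lambda>1 = (*) h0 ` \<Lambda>2" by blast
    define R where "R = norm h0"
    have bound: "norm h \<le> R" if hh: "\<Lambda>1 = (*) h ` \<Lambda>2" for h
    proof (rule ccontr)
      assume "\<not> norm h \<le> R"
      then have lt: "norm h0 < norm h" unfolding R_def by simp
      have h0ne: "h0 \<noteq> 0" using hne0[OF h0] .
      have hne: "h \<noteq> 0" using hne0[OF hh] .
      define v where "v = h0 / h"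
      have v1: "norm v < 1" unfolding v_def using lt hne by (simp add: norm_divide divide_less_eq)
      have vne: "v \<noteq> 0" unfolding v_def using h0ne hne by simp
      have vL: "v * l \<in> \<Lambda>2" if "l \<in> \<Lambda>2" for l
      proof -
        have "h0 * l \<in> \<Lambda>1" using h0 that by blast
        then obtain l' where l': "l' \<in> \<Lambda>2" "h0 * l = h * l'" using hh by blast
        have "v * l = l'" unfolding v_def using l'(2) hne by (simp add: field_simps)
        then show ?thesis using l'(1) by simp
      qed
      have vj: "v ^ j * (of_nat t * w) \<in> \<Lambda>2" for j
        by (induct j) (use tw vL in \<open>auto simp: mult.assoc\<close>)
      have "\<delta> / norm (of_nat t * w) > 0" using \<delta>(1) tw0 by simp
      then obtain j where j: "norm v ^ j < \<delta> / norm (of_nat t * w)"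
        using real_arch_pow_inv[OF _ v1] by blast
      have "norm (v ^ j * (of_nat t * w)) = norm v ^ j * norm (of_nat t * w)"
        by (simp add: norm_mult norm_power)
      also have "\<dots> < \<delta>" using j tw0 by (simp add: less_divide_eq)
      finally have "norm (v ^ j * (of_nat t * w)) < \<delta>" .
      moreover have "v ^ j * (of_nat t * w) \<noteq> 0" using vne tw0 by simp
      ultimately show False using \<delta>(2) vj[of j] by force
    qed
    define E where "E = n * t"
    have Epos: "E > 0" unfolding E_def using npos t(1) by simp
    have EhO: "of_nat E * h \<in> OK K" if hh: "\<Lambda>1 = (*) h ` \<Lambda>2" for h
    proof -
      have "h * (of_nat t * w) \<in> \<Lambda>1" using hh tw by blast
      then obtain u where u: "u \<in> OK K" "of_nat n * (h * (of_nat t * w)) = u * w" using nL1 by blast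
      have "(of_nat E * h) * w = u * w" unfolding E_def using u(2) by (simp add: algebra_simps)
      then have "of_nat E * h = u" using w(1) by simp
      then show ?thesis using u(1) by simp
    qed
    define C where "C = (real E * (R + 1))^2"
    define B where "B = nat \<lceil>C\<rceil>"
    define P where "P = (fact B :: nat)"
    define m where "m = E * n * t * P"
    have mpos: "m > 0" unfolding m_def P_def using Epos npos t(1) by simp
    have claim: "of_nat m * (u * w / (of_nat n * (h - 1))) \<in> \<Lambda>2"
      if hh: "\<Lambda>1 = (*) h ` \<Lambda>2" and h1: "h \<noteq> 1" and u: "u \<in> OK K" for h u
    proof -
      define g where "g = of_nat E * (h - 1)"
      have gO: "g \<in> OK K" unfolding g_def using O_diff[OF EhO[OF hh] O_of_nat[of E]]
        by (simp add: algebra_simps)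
      have g0: "g \<noteq> 0" unfolding g_def using Epos h1 by simp
      have "g * cnj g \<in> \<int>" using gO unfolding OK_iff Cint_def by blast
      then obtain k where k: "g * cnj g = of_int k" by (metis Ints_cases)
      have gn: "g * cnj g = complex_of_real ((norm g)^2)" by (metis complex_norm_square of_real_power)
      have "complex_of_real ((norm g)^2) = complex_of_real (real_of_int k)" using gn k by simp
      then have kn: "(norm g)^2 = real_of_int k" by (simp only: of_real_eq_iff)
      have "norm g > 0" using g0 by simp
      then have "(norm g)^2 > 0" by simp
      then have "real_of_int k > 0" using kn by linarith
      then have kpos: "k \<ge> 1" by simp
      have "norm g = real E * norm (h - 1)" unfolding g_def by (simp add: norm_mult)
      also have "\<dots> \<le> real E * (R + 1)"
        using bound[OF hh] norm_triangle_ineq4[of h 1] by (intro mult_left_mono) auto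
      finally have "norm g \<le> real E * (R + 1)" .
      then have "(norm g)^2 \<le> C" unfolding C_def by (intro power_mono) auto
      then have "real_of_int k \<le> C" using kn by simp
      then have "k \<le> \<lceil>C\<rceil>" by linarith
      then have kB: "nat k \<le> B" unfolding B_def by simp
      have "nat k dvd P" unfolding P_def using kpos kB by (intro dvd_fact) auto
      then obtain j where j: "P = nat k * j" by blast
      have Pc: "(of_nat P :: complex) = of_int k * of_nat j"
      proof -
        have "(of_nat P :: complex) = of_nat (nat k) * of_nat j" unfolding j by simp
        also have "(of_nat (nat k) :: complex) = of_int k" using kpos by simp
        finally show ?thesis .
      qed
      have h1': "h - 1 \<noteq> 0" using h1 by simp
      have k0: "(of_int k :: complex) \<noteq> 0" using kpos by simp
      have "(h - 1) * (of_nat E * cnj g) = g * cnj g" unfolding g_def by (simp add: algebra_simps)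
      then have hk: "(h - 1) * (of_nat E * cnj g) = of_int k" using k by simp
      have inv: "1 / (h - 1) = of_nat E * cnj g / of_int k"
        using hk h1' k0 by (simp add: eq_divide_eq divide_eq_eq) (metis mult.commute)
      have n0: "(of_nat n :: complex) \<noteq> 0" using npos by simp
      have "of_nat m * (u * w / (of_nat n * (h - 1))) =
            (of_nat m / of_nat n) * (u * w) * (1 / (h - 1))"
        by (simp add: divide_inverse inverse_mult_distrib mult_ac)
      also have "(of_nat m / of_nat n :: complex) = of_nat E * of_nat t * of_nat P"
        unfolding m_def using n0 by simp
      also have "of_nat E * of_nat t * of_nat P * (u * w) * (1 / (h - 1)) =
                 of_nat E * of_nat t * (of_int k * of_nat j) * (u * w) * (of_nat E * cnj g / of_int k)"
        unfolding inv Pc ..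
      also have "\<dots> = of_nat t * (of_nat E * of_nat E * of_nat j * cnj g * u) * w"
        using k0 by (simp add: field_simps)
      finally have eq: "of_nat m * (u * w / (of_nat n * (h - 1))) =
          of_nat t * (of_nat E * of_nat E * of_nat j * cnj g * u) * w" .
      have "of_nat E * of_nat E * of_nat j * cnj g * u \<in> OK K"
        by (intro O_mult O_of_nat O_cnj gO u)
      then show ?thesis unfolding eq using t(2) by blast
    qed
    obtain D where D: "D > 0" "of_nat D * x2 \<in> OK K" using O_denom[OF x2(1)] by blast
    define N0 where "N0 = D * m"
    have N0pos: "N0 > 0" unfolding N0_def using D mpos by simp
    have main: "\<not> (\<forall>x\<in>K. of_nat N0 * x \<in> OK K \<longrightarrow> \<phi>1 x - h * \<phi>2 x \<in> \<Lambda>1)"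
      if hh: "\<Lambda>1 = (*) h ` \<Lambda>2" for h
    proof
      assume cond: "\<forall>x\<in>K. of_nat N0 * x \<in> OK K \<longrightarrow> \<phi>1 x - h * \<phi>2 x \<in> \<Lambda>1"
      show False
      proof (cases "h = 1")
        case True
        then have L12: "\<Lambda>1 = \<Lambda>2" using hh by simp
        have "\<forall>x\<in>K. \<phi>1 x - \<phi>2 x \<in> \<Lambda>1"
        proof
          fix x assume "x \<in> K"
          then have "\<phi>1 x - \<phi>2 x \<in> {a + b | a b. a \<in> \<Lambda>1 \<and> b \<in> \<Lambda>2}"
            using cm unfolding commens_def \<phi>1_def \<phi>2_def \<Lambda>1_def \<Lambda>2_def by blast
          then obtain a b where ab: "a \<in> \<Lambda>1" "b \<in> \<Lambda>2" "\<phi>1 x - \<phi>2 x = a + b" by blast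
          have "b \<in> \<Lambda>1" using ab(2) L12 by simp
          then show "\<phi>1 x - \<phi>2 x \<in> \<Lambda>1" using lat_add[OF o1 ab(1)] ab(3) by simp
        qed
        then show False using nu L12 unfolding \<phi>1_def \<phi>2_def \<Lambda>1_def \<Lambda>2_def by blast
      next
        case False
        define y where "y = x2 / of_nat m"
        have yK: "y \<in> K" unfolding y_def using K_divide[OF x2(1) K_of_nat] .
        have my: "of_nat m * y = x2" unfolding y_def using mpos by simp
        have "of_nat N0 * y = of_nat D * (of_nat m * y)" unfolding N0_def by (simp add: mult.assoc)
        also have "\<dots> = of_nat D * x2" using my by simp
        finally have "of_nat N0 * y = of_nat D * x2" .
        then have "of_nat N0 * y \<in> OK K" using D(2) by simp
        then have c: "\<phi>1 y - h * \<phi>2 y \<in> \<Lambda>1" using cond yK by blast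
        have "\<phi>1 y - \<phi>2 y \<in> {a + b | a b. a \<in> \<Lambda>1 \<and> b \<in> \<Lambda>2}"
          using cm yK unfolding commens_def \<phi>1_def \<phi>2_def \<Lambda>1_def \<Lambda>2_def by blast
        then obtain a b where ab: "a \<in> \<Lambda>1" "b \<in> \<Lambda>2" "\<phi>1 y - \<phi>2 y = a + b" by blast
        define lam where "lam = (a - (\<phi>1 y - h * \<phi>2 y)) + b"
        have "lam = (a + b) - (\<phi>1 y - h * \<phi>2 y)" unfolding lam_def by (simp add: algebra_simps)
        also have "\<dots> = (\<phi>1 y - \<phi>2 y) - (\<phi>1 y - h * \<phi>2 y)" using ab(3) by simp
        also have "\<dots> = (h - 1) * \<phi>2 y" by (simp add: algebra_simps)
        finally have lam_eq: "(h - 1) * \<phi>2 y = lam" by simp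
        have acL: "a - (\<phi>1 y - h * \<phi>2 y) \<in> \<Lambda>1" using lat_diff[OF o1 ab(1) c] .
        obtain u1 where u1: "u1 \<in> OK K" "of_nat n * (a - (\<phi>1 y - h * \<phi>2 y)) = u1 * w"
          using nL1[OF acL] by blast
        obtain u2 where u2: "u2 \<in> OK K" "of_nat n * b = u2 * w" using nL2[OF ab(2)] by blast
        have nlam: "of_nat n * lam = (u1 + u2) * w" unfolding lam_def using u1(2) u2(2)
          by (simp add: algebra_simps)
        have h1': "h - 1 \<noteq> 0" using False by simp
        have "\<phi>2 y * (of_nat n * (h - 1)) = of_nat n * ((h - 1) * \<phi>2 y)" by (simp add: algebra_simps)
        also have "\<dots> = of_nat n * lam" using lam_eq by simp
        also have "\<dots> = (u1 + u2) * w" using nlam .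
        finally have e3: "\<phi>2 y * (of_nat n * (h - 1)) = (u1 + u2) * w" .
        have "of_nat n * (h - 1) \<noteq> 0" using h1' npos by simp
        then have "\<phi>2 y = (u1 + u2) * w / (of_nat n * (h - 1))"
          using e3 by (simp add: eq_divide_eq)
        then have "of_nat m * \<phi>2 y \<in> \<Lambda>2"
          using claim[OF hh False O_add[OF u1(1) u2(1)]] by simp
        moreover have "\<phi>2 (of_nat m * y) - of_nat m * \<phi>2 y \<in> \<Lambda>2"
          using klatD(4)[OF k2] O_of_nat yK unfolding \<phi>2_def \<Lambda>2_def by blast
        ultimately have "(\<phi>2 (of_nat m * y) - of_nat m * \<phi>2 y) + of_nat m * \<phi>2 y \<in> \<Lambda>2"
          using lat_add[OF o2] by blast
        then have "\<phi>2 (of_nat m * y) \<in> \<Lambda>2" by simp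
        then show False using x2(2) my unfolding \<phi>2_def \<Lambda>2_def by simp
      qed
    qed
    have "\<forall>h. fst L1 = (*) h ` fst L2 \<longrightarrow>
            \<not> (\<forall>x\<in>K. of_nat N0 * x \<in> OK K \<longrightarrow> snd L1 x - h * snd L2 x \<in> fst L1)"
      using main unfolding \<phi>1_def \<phi>2_def \<Lambda>1_def \<Lambda>2_def by blast
    then show ?thesis using N0pos by blast
  qed
qed

end

context iqf
begin

definition Wset :: "klat \<Rightarrow> klat \<Rightarrow> nat \<Rightarrow> (klat \<times> klat) set" where
  "Wset L1 L2 N0 = {\<gamma> \<in> Rt K. \<exists>c. c \<noteq> 0 \<and> fst (fst \<gamma>) = (*) c ` fst L1 \<and> fst (snd \<gamma>) = (*) c ` fst L2 \<and>
      (\<forall>x\<in>K. of_nat N0 * x \<in> OK K \<longrightarrow>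
         snd (fst \<gamma>) x - c * snd L1 x \<in> fst (fst \<gamma>) \<and> snd (snd \<gamma>) x - c * snd L2 x \<in> fst (snd \<gamma>))}"

lemma transport:
  assumes "olat \<Lambda>2" "\<Lambda>2 = (*) e ` \<Lambda>1" "p2 - e * p1 \<in> \<Lambda>2" "p1 - c * p \<in> \<Lambda>1"
  shows "p2 - (e * c) * p \<in> \<Lambda>2"
proof -
  have "e * (p1 - c * p) \<in> \<Lambda>2" using assms(2,4) by blast
  then have "(p2 - e * p1) + e * (p1 - c * p) \<in> \<Lambda>2" using lat_add[OF assms(1) assms(3)] by blast
  then show ?thesis by (simp add: algebra_simps)
qed

lemma image_mult2: "(*) e ` ((*) c ` A) = (*) (e * c) ` (A :: complex set)"
  by (simp add: image_image mult.assoc)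

lemma Rt_klat: "\<gamma> \<in> Rt K \<Longrightarrow> is_klattice K (fst \<gamma>) \<and> is_klattice K (snd \<gamma>) \<and> commens K (fst \<gamma>) (snd \<gamma>)"
  unfolding Rt_def by auto

lemma W_closed:
  assumes g: "\<gamma> \<in> Wset L1 L2 N0" and r: "(\<gamma>, \<gamma>') \<in> gk_rel K"
  shows "\<gamma>' \<in> Wset L1 L2 N0"
proof -
  obtain c where c: "c \<noteq> 0" "fst (fst \<gamma>) = (*) c ` fst L1" "fst (snd \<gamma>) = (*) c ` fst L2"
    "\<forall>x\<in>K. of_nat N0 * x \<in> OK K \<longrightarrow>
         snd (fst \<gamma>) x - c * snd L1 x \<in> fst (fst \<gamma>) \<and> snd (snd \<gamma>) x - c * snd L2 x \<in> fst (snd \<gamma>)"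
    using g unfolding Wset_def by blast
  from r obtain e where e: "\<gamma>' \<in> Rt K" "e \<noteq> 0" "klat_eq K (fst \<gamma>') (scale e (fst \<gamma>))"
     "klat_eq K (snd \<gamma>') (scale e (snd \<gamma>))"
    unfolding gk_rel_def by blast
  have o1: "olat (fst (fst \<gamma>'))" and o2: "olat (fst (snd \<gamma>'))"
    using Rt_klat[OF e(1)] klat_olat by blast+
  have f1: "fst (fst \<gamma>') = (*) e ` fst (fst \<gamma>)" and p1: "\<forall>x\<in>K. snd (fst \<gamma>') x - e * snd (fst \<gamma>) x \<in> fst (fst \<gamma>')"
    using e(3) unfolding klat_eq_def scale_def by auto
  have f2: "fst (snd \<gamma>') = (*) e ` fst (snd \<gamma>)" and p2: "\<forall>x\<in>K. snd (snd \<gamma>') x - e * snd (snd \<gamma>) x \<in> fst (snd \<gamma>')"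
    using e(4) unfolding klat_eq_def scale_def by auto
  have "e * c \<noteq> 0" using c(1) e(2) by simp
  moreover have "fst (fst \<gamma>') = (*) (e * c) ` fst L1" using f1 c(2) image_mult2 by simp
  moreover have "fst (snd \<gamma>') = (*) (e * c) ` fst L2" using f2 c(3) image_mult2 by simp
  moreover have "\<forall>x\<in>K. of_nat N0 * x \<in> OK K \<longrightarrow>
         snd (fst \<gamma>') x - (e * c) * snd L1 x \<in> fst (fst \<gamma>') \<and> snd (snd \<gamma>') x - (e * c) * snd L2 x \<in> fst (snd \<gamma>')"
  proof (intro ballI impI conjI)
    fix x assume x: "x \<in> K" "of_nat N0 * x \<in> OK K"
    show "snd (fst \<gamma>') x - (e * c) * snd L1 x \<in> fst (fst \<gamma>')"
      using transport[OF o1 f1] p1 c(4) x by blast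
    show "snd (snd \<gamma>') x - (e * c) * snd L2 x \<in> fst (snd \<gamma>')"
      using transport[OF o2 f2] p2 c(4) x by blast
  qed
  ultimately show ?thesis using e(1) unfolding Wset_def by blast
qed

lemma W_open:
  assumes g: "\<gamma> \<in> Wset L1 L2 N0"
  shows "\<exists>\<epsilon>>0. nbhd K \<gamma> \<epsilon> N0 \<subseteq> Wset L1 L2 N0"
proof -
  obtain c where c: "c \<noteq> 0" "fst (fst \<gamma>) = (*) c ` fst L1" "fst (snd \<gamma>) = (*) c ` fst L2"
    "\<forall>x\<in>K. of_nat N0 * x \<in> OK K \<longrightarrow>
         snd (fst \<gamma>) x - c * snd L1 x \<in> fst (fst \<gamma>) \<and> snd (snd \<gamma>) x - c * snd L2 x \<in> fst (snd \<gamma>)"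
    and gR: "\<gamma> \<in> Rt K"
    using g unfolding Wset_def by blast
  define \<Lambda> where "\<Lambda> = fst (fst \<gamma>)"
  have oL: "olat \<Lambda>" unfolding \<Lambda>_def using Rt_klat[OF gR] klat_olat by blast
  obtain \<delta> where \<delta>: "\<delta> > 0" "\<forall>l\<in>\<Lambda>. l \<noteq> 0 \<longrightarrow> \<delta> \<le> norm l" using lat_discrete[OF oL] by blast
  obtain l0 where l0: "l0 \<in> \<Lambda>" "l0 \<noteq> 0" using lat_nonzero[OF oL] by blast
  obtain \<theta> where \<theta>: "\<theta> \<in> OK K" "\<theta> \<notin> \<real>" using O_nonreal by blast
  define \<epsilon> where "\<epsilon> = min (1/2) (\<delta> / (4 * (norm \<theta> + 1) * (norm l0 + 1)))"
  have a0: "norm \<theta> + 1 > 0" using norm_ge_zero[of \<theta>] by linarith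
  have b0: "norm l0 + 1 > 0" using norm_ge_zero[of l0] by linarith
  have pos0: "4 * (norm \<theta> + 1) * (norm l0 + 1) > 0"
    by (rule mult_pos_pos[OF mult_pos_pos[OF _ a0] b0]) simp
  have "\<delta> / (4 * (norm \<theta> + 1) * (norm l0 + 1)) > 0" using divide_pos_pos[OF \<delta>(1) pos0] .
  then have eps_pos: "\<epsilon> > 0" unfolding \<epsilon>_def by (simp only: min_less_iff_conj) simp
  have eps_half: "\<epsilon> \<le> 1/2" unfolding \<epsilon>_def by (rule min.cobounded1)
  have small: "4 * \<epsilon> * norm \<theta> * norm l0 < \<delta>"
  proof -
    note pos = pos0
    have "\<epsilon> \<le> \<delta> / (4 * (norm \<theta> + 1) * (norm l0 + 1))" unfolding \<epsilon>_def by (rule min.cobounded2)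
    then have "\<epsilon> * (4 * (norm \<theta> + 1) * (norm l0 + 1)) \<le> \<delta>" using pos by (simp add: le_divide_eq)
    moreover have "4 * \<epsilon> * norm \<theta> * norm l0 < \<epsilon> * (4 * (norm \<theta> + 1) * (norm l0 + 1))"
    proof -
      have "norm \<theta> * norm l0 < (norm \<theta> + 1) * (norm l0 + 1)"
        by (simp add: algebra_simps) (smt (verit) norm_ge_zero)
      then have "4 * (norm \<theta> * norm l0) < 4 * ((norm \<theta> + 1) * (norm l0 + 1))" by simp
      then have lt: "\<epsilon> * (4 * (norm \<theta> * norm l0)) < \<epsilon> * (4 * ((norm \<theta> + 1) * (norm l0 + 1)))"
        using eps_pos by (rule mult_strict_left_mono)
      have "4 * \<epsilon> * norm \<theta> * norm l0 = \<epsilon> * (4 * (norm \<theta> * norm l0))" by (simp add: mult_ac)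
      also note lt
      also have "\<epsilon> * (4 * ((norm \<theta> + 1) * (norm l0 + 1))) = \<epsilon> * (4 * (norm \<theta> + 1) * (norm l0 + 1))"
        by (simp only: mult.assoc)
      finally show ?thesis .
    qed
    ultimately show ?thesis by linarith
  qed
  have "nbhd K \<gamma> \<epsilon> N0 \<subseteq> Wset L1 L2 N0"
  proof
    fix \<gamma>' assume "\<gamma>' \<in> nbhd K \<gamma> \<epsilon> N0"
    then obtain \<alpha> where g'R: "\<gamma>' \<in> Rt K" and al: "linear \<alpha>" "onorm (\<lambda>z. \<alpha> z - z) < \<epsilon>"
      "fst (fst \<gamma>') = \<alpha> ` fst (fst \<gamma>)" "fst (snd \<gamma>') = \<alpha> ` fst (snd \<gamma>)"
      "\<forall>x\<in>K. of_nat N0 * x \<in> OK K \<longrightarrow>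
          snd (fst \<gamma>') x - \<alpha> (snd (fst \<gamma>) x) \<in> fst (fst \<gamma>') \<and>
          snd (snd \<gamma>') x - \<alpha> (snd (snd \<gamma>) x) \<in> fst (snd \<gamma>')"
      unfolding nbhd_def by blast
    have o1: "olat (fst (fst \<gamma>'))" and o2: "olat (fst (snd \<gamma>'))"
      using Rt_klat[OF g'R] klat_olat by blast+
    have img: "\<theta> * \<alpha> l0 \<in> \<alpha> ` \<Lambda>"
    proof -
      have "\<alpha> l0 \<in> fst (fst \<gamma>')" using al(3) l0(1) unfolding \<Lambda>_def by blast
      then have "\<theta> * \<alpha> l0 \<in> fst (fst \<gamma>')" using lat_smult[OF o1 \<theta>(1)] by blast
      then show ?thesis using al(3) unfolding \<Lambda>_def by simp
    qed
    have cl: "\<alpha> z = \<alpha> 1 * z" for z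
      by (rule clin[OF al(1) al(2) eps_half \<delta>(2) l0 \<theta>(2) lat_smult[OF oL \<theta>(1) l0(1)] img
            _ small]) (use lat_diff[OF oL] in blast)
    define e where "e = \<alpha> 1"
    have aeq: "\<alpha> = (*) e"
    proof
      fix z show "\<alpha> z = e * z" unfolding e_def by (rule cl)
    qed
    have aimg: "\<alpha> ` A = (*) e ` A" for A
      unfolding aeq ..
    have e0: "e \<noteq> 0"
    proof
      assume "e = 0"
      then have "fst (fst \<gamma>') \<subseteq> {0}" using al(3) aimg by auto
      moreover have "fst (fst \<gamma>') \<noteq> {0}" using o1 unfolding olat_def by blast
      ultimately show False using lat_0[OF o1] by blast
    qed
    have f1: "fst (fst \<gamma>') = (*) e ` fst (fst \<gamma>)" using al(3) aimg by simp
    have f2: "fst (snd \<gamma>') = (*) e ` fst (snd \<gamma>)" using al(4) aimg by simp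
    have "e * c \<noteq> 0" using c(1) e0 by simp
    moreover have "fst (fst \<gamma>') = (*) (e * c) ` fst L1" using f1 c(2) image_mult2 by simp
    moreover have "fst (snd \<gamma>') = (*) (e * c) ` fst L2" using f2 c(3) image_mult2 by simp
    moreover have "\<forall>x\<in>K. of_nat N0 * x \<in> OK K \<longrightarrow>
         snd (fst \<gamma>') x - (e * c) * snd L1 x \<in> fst (fst \<gamma>') \<and> snd (snd \<gamma>') x - (e * c) * snd L2 x \<in> fst (snd \<gamma>')"
    proof (intro ballI impI conjI)
      fix x assume x: "x \<in> K" "of_nat N0 * x \<in> OK K"
      have a1: "snd (fst \<gamma>') x - e * snd (fst \<gamma>) x \<in> fst (fst \<gamma>')"
        using al(5) x unfolding aeq by blast
      have a2: "snd (snd \<gamma>') x - e * snd (snd \<gamma>) x \<in> fst (snd \<gamma>')"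
        using al(5) x unfolding aeq by blast
      show "snd (fst \<gamma>') x - (e * c) * snd L1 x \<in> fst (fst \<gamma>')"
        using transport[OF o1 f1 a1] c(4) x by blast
      show "snd (snd \<gamma>') x - (e * c) * snd L2 x \<in> fst (snd \<gamma>')"
        using transport[OF o2 f2 a2] c(4) x by blast
    qed
    ultimately show "\<gamma>' \<in> Wset L1 L2 N0" using g'R unfolding Wset_def by blast
  qed
  then show ?thesis using eps_pos by blast
qed

end

context iqf
begin

lemma gk_refl: assumes "\<gamma> \<in> Rt K" shows "(\<gamma>, \<gamma>) \<in> gk_rel K"
proof -
  have o1: "olat (fst (fst \<gamma>))" and o2: "olat (fst (snd \<gamma>))"
    using Rt_klat[OF assms] klat_olat by blast+
  have "klat_eq K (fst \<gamma>) (scale 1 (fst \<gamma>))"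
    unfolding klat_eq_def scale_def using lat_0[OF o1] by simp
  moreover have "klat_eq K (snd \<gamma>) (scale 1 (snd \<gamma>))"
    unfolding klat_eq_def scale_def using lat_0[OF o2] by simp
  ultimately have ex: "\<exists>c::complex. c \<noteq> 0 \<and> klat_eq K (fst \<gamma>) (scale c (fst \<gamma>)) \<and> klat_eq K (snd \<gamma>) (scale c (snd \<gamma>))"
    by (intro exI[of _ 1]) simp
  show ?thesis unfolding gk_rel_def using assms ex by auto
qed

lemma GK_E: assumes "\<Gamma> \<in> GK K" obtains \<gamma> where "\<gamma> \<in> Rt K" "\<Gamma> = gk_rel K `` {\<gamma>}"
  using assms unfolding GK_def quotient_def by blast

lemma GK_sub: assumes "\<Gamma> \<in> GK K" shows "\<Gamma> \<subseteq> Rt K"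
  using assms unfolding GK_def quotient_def gk_rel_def by blast

lemma main_loc:
  assumes G: "\<Gamma> \<in> G1 K - units_GK K"
  shows "\<exists>V. gk_open K V \<and> \<Gamma> \<in> V \<and> rg ` V \<inter> sr ` V = {}"
proof -
  have GG: "\<Gamma> \<in> GK K" using G unfolding G1_def by blast
  obtain \<gamma>0 where g0: "\<gamma>0 \<in> Rt K" "\<Gamma> = gk_rel K `` {\<gamma>0}" using GK_E[OF GG] by blast
  define L1 where "L1 = fst \<gamma>0"
  define L2 where "L2 = snd \<gamma>0"
  have k1: "is_klattice K L1" and k2: "is_klattice K L2" and cm: "commens K L1 L2"
    using Rt_klat[OF g0(1)] unfolding L1_def L2_def by auto
  have o1: "olat (fst L1)" and o2: "olat (fst L2)" using k1 k2 klat_olat by auto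
  have g0G: "\<gamma>0 \<in> \<Gamma>" using g0 gk_refl by blast
  have nounit: "\<not> (\<exists>L. (L, L) \<in> \<Gamma>)" using G GG unfolding units_GK_def by blast
  have nu: "\<not> (fst L1 = fst L2 \<and> (\<forall>x\<in>K. snd L1 x - snd L2 x \<in> fst L1))"
  proof
    assume a: "fst L1 = fst L2 \<and> (\<forall>x\<in>K. snd L1 x - snd L2 x \<in> fst L1)"
    have "commens K L1 L1" unfolding commens_def using lat_0[OF o1] by force
    then have R: "(L1, L1) \<in> Rt K" using k1 unfolding Rt_def by simp
    have "klat_eq K L1 (scale 1 L1)" unfolding klat_eq_def scale_def using lat_0[OF o1] by simp
    moreover have "klat_eq K L1 (scale 1 L2)"
    proof -
      have a1: "fst L2 = fst L1" and a2: "\<forall>x\<in>K. snd L1 x - snd L2 x \<in> fst L1" using a by auto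
      show ?thesis unfolding klat_eq_def scale_def using a2 by (simp add: a1)
    qed
    ultimately have "(\<gamma>0, (L1, L1)) \<in> gk_rel K"
      unfolding gk_rel_def L1_def L2_def using g0(1) R
      by (auto intro!: exI[of _ 1] simp: L1_def[symmetric] L2_def[symmetric])
    then have "(L1, L1) \<in> \<Gamma>" using g0(2) by blast
    then show False using nounit by blast
  qed
  have "\<exists>x2\<in>K. snd L2 x2 \<notin> fst L2"
  proof (rule ccontr)
    assume "\<not> (\<exists>x2\<in>K. snd L2 x2 \<notin> fst L2)"
    then have z: "\<forall>x\<in>K. snd L2 x \<in> fst L2" by blast
    have srX: "sr \<Gamma> \<in> Xset K" and srF: "sr \<Gamma> \<notin> Fset K" using G unfolding G1_def by auto
    obtain L where L: "is_klattice K L" "sr \<Gamma> = xclass K L" using srX unfolding Xset_def by blast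
    have "L2 \<in> sr \<Gamma>" unfolding sr_def L2_def using g0G by blast
    then obtain c where c: "c \<noteq> 0" "klat_eq K L2 (scale c L)" using L(2) unfolding xclass_def by blast
    have fL: "fst L2 = (*) c ` fst L" and pL: "\<forall>x\<in>K. snd L2 x - c * snd L x \<in> fst L2"
      using c(2) unfolding klat_eq_def scale_def by auto
    have "\<forall>x\<in>K. snd L x \<in> fst L"
    proof
      fix x assume x: "x \<in> K"
      have "snd L2 x - (snd L2 x - c * snd L x) \<in> fst L2" using lat_diff[OF o2] z pL x by blast
      then have "c * snd L x \<in> (*) c ` fst L" using fL by simp
      then obtain mu where "mu \<in> fst L" "c * snd L x = c * mu" by blast
      then show "snd L x \<in> fst L" using c(1) by simp
    qed
    then have "sr \<Gamma> \<in> Fset K" unfolding Fset_def using L by blast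
    then show False using srF by blast
  qed
  then obtain x2 where x2: "x2 \<in> K" "snd L2 x2 \<notin> fst L2" by blast
  obtain N0 :: nat where N0: "N0 > 0" "\<forall>h. fst L1 = (*) h ` fst L2 \<longrightarrow>
            \<not> (\<forall>x\<in>K. of_nat N0 * x \<in> OK K \<longrightarrow> snd L1 x - h * snd L2 x \<in> fst L1)"
    using disj_main[OF k1 k2 cm x2 nu] by blast
  define W where "W = Wset L1 L2 N0"
  define V where "V = {\<Gamma>' \<in> GK K. \<Gamma>' \<subseteq> W}"
  have WRt: "W \<subseteq> Rt K" unfolding W_def Wset_def by blast
  have UV: "\<Union> V = W"
  proof
    show "\<Union> V \<subseteq> W" unfolding V_def by blast
  next
    show "W \<subseteq> \<Union> V"
    proof
      fix \<gamma> assume g: "\<gamma> \<in> W"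
      then have gR: "\<gamma> \<in> Rt K" using WRt by blast
      have "gk_rel K `` {\<gamma>} \<in> GK K" unfolding GK_def using gR by (rule quotientI)
      moreover have "gk_rel K `` {\<gamma>} \<subseteq> W" using W_closed g unfolding W_def by blast
      moreover have "\<gamma> \<in> gk_rel K `` {\<gamma>}" using gk_refl[OF gR] by blast
      ultimately show "\<gamma> \<in> \<Union> V" unfolding V_def by blast
    qed
  qed
  have op: "gk_open K V"
    unfolding gk_open_def rt_open_def UV
  proof (intro conjI ballI)
    show "V \<subseteq> GK K" unfolding V_def by blast
    show "W \<subseteq> Rt K" by (rule WRt)
    fix \<gamma> assume "\<gamma> \<in> W"
    then obtain \<epsilon> where "\<epsilon> > 0" "nbhd K \<gamma> \<epsilon> N0 \<subseteq> W" using W_open unfolding W_def by blast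
    then show "\<exists>\<epsilon>>0. \<exists>N>0. nbhd K \<gamma> \<epsilon> N \<subseteq> W" using N0(1) by blast
  qed
  have g0W: "\<gamma>0 \<in> W"
  proof -
    have "fst (fst \<gamma>0) = (*) 1 ` fst L1" "fst (snd \<gamma>0) = (*) 1 ` fst L2"
      unfolding L1_def L2_def by simp_all
    moreover have "\<forall>x\<in>K. of_nat N0 * x \<in> OK K \<longrightarrow>
         snd (fst \<gamma>0) x - 1 * snd L1 x \<in> fst (fst \<gamma>0) \<and> snd (snd \<gamma>0) x - 1 * snd L2 x \<in> fst (snd \<gamma>0)"
      using lat_0[OF o1] lat_0[OF o2] unfolding L1_def L2_def by simp
    ultimately show ?thesis unfolding W_def Wset_def using g0(1) by (intro CollectI conjI exI[of _ 1]) auto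
  qed
  have GV: "\<Gamma> \<in> V"
  proof -
    have "\<Gamma> \<subseteq> W" unfolding g0(2) using W_closed g0W unfolding W_def by blast
    then show ?thesis unfolding V_def using GG by blast
  qed
  have disj: "rg ` V \<inter> sr ` V = {}"
  proof (rule ccontr)
    assume "rg ` V \<inter> sr ` V \<noteq> {}"
    then obtain Ga Gb where G: "Ga \<in> V" "Gb \<in> V" "rg Ga = sr Gb" by auto
    obtain \<gamma>a where ga: "\<gamma>a \<in> Rt K" "Ga = gk_rel K `` {\<gamma>a}" using GK_E G(1) unfolding V_def by blast
    have gaG: "\<gamma>a \<in> Ga" using ga gk_refl by blast
    have "fst \<gamma>a \<in> rg Ga" unfolding rg_def using gaG by blast
    then have "fst \<gamma>a \<in> sr Gb" using G(3) by simp
    then obtain \<gamma>b where gb: "\<gamma>b \<in> Gb" "snd \<gamma>b = fst \<gamma>a" unfolding sr_def by (metis imageE)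
    have gaW: "\<gamma>a \<in> W" using gaG G(1) unfolding V_def by blast
    have gbW: "\<gamma>b \<in> W" using gb(1) G(2) unfolding V_def by blast
    define M where "M = fst \<gamma>a"
    have oM: "olat (fst M)" unfolding M_def using Rt_klat[OF ga(1)] klat_olat by blast
    obtain c where c: "c \<noteq> 0" "fst M = (*) c ` fst L1"
      "\<forall>x\<in>K. of_nat N0 * x \<in> OK K \<longrightarrow> snd M x - c * snd L1 x \<in> fst M"
      using gaW unfolding W_def Wset_def M_def by blast
    obtain d where d: "d \<noteq> 0" "fst M = (*) d ` fst L2"
      "\<forall>x\<in>K. of_nat N0 * x \<in> OK K \<longrightarrow> snd M x - d * snd L2 x \<in> fst M"
      using gbW gb(2) unfolding W_def Wset_def M_def by force
    define h where "h = d / c"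
    have hL: "fst L1 = (*) h ` fst L2"
    proof -
      have "fst L1 = (*) (1 / c) ` ((*) c ` fst L1)" using c(1) by (simp add: image_image)
      also have "\<dots> = (*) (1 / c) ` ((*) d ` fst L2)" using c(2) d(2) by simp
      also have "\<dots> = (*) h ` fst L2" unfolding h_def by (simp add: image_image)
      finally show ?thesis .
    qed
    have "\<forall>x\<in>K. of_nat N0 * x \<in> OK K \<longrightarrow> snd L1 x - h * snd L2 x \<in> fst L1"
    proof (intro ballI impI)
      fix x assume x: "x \<in> K" "of_nat N0 * x \<in> OK K"
      have "(snd M x - d * snd L2 x) - (snd M x - c * snd L1 x) \<in> fst M"
        using lat_diff[OF oM] c(3) d(3) x by blast
      then have "c * snd L1 x - d * snd L2 x \<in> (*) c ` fst L1" using c(2) by simp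
      then obtain l where l: "l \<in> fst L1" "c * snd L1 x - d * snd L2 x = c * l" by blast
      have "snd L1 x - h * snd L2 x = l" using l(2) c(1) unfolding h_def by (simp add: field_simps)
      then show "snd L1 x - h * snd L2 x \<in> fst L1" using l(1) by simp
    qed
    then show False using N0(2) hL by blast
  qed
  show ?thesis using op GV disj by blast
qed

end

theorem mainTheorem15:
  fixes K :: "complex set"
  assumes "imag_quadratic_field K"
  shows "\<forall>\<Gamma> \<in> G1 K - units_GK K. \<exists>V. gk_open K V \<and> \<Gamma> \<in> V \<and> rg ` V \<inter> sr ` V = {}"
proof -
  interpret iqf K using assms by unfold_locales
  show ?thesis using main_loc by blast
qed

end
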